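(* There are infinitely many positive integers $n$ with $V(n+1)>V(n)$, and there are infinitely many positive integers $n$ with $V(n+1)<V(n)$.
   Context: For a positive integer $n$, an integer $a$ is called regular modulo $n$ if there exists an integer $x$ with $a^2x\equiv a \pmod n$. Let $V(n)$ denote the number of integers $a$ with $1\le a\le n$ that are regular modulo $n$. (Known fact: $V$ is multiplicative, $V(1)=1$, and $V(p^{\alpha})=p^{\alpha}-p^{\alpha-1}+1$ for a prime $p$ and $\alpha\ge1$.) *)

theory Defs
  imports "HOL-Number_Theory.Number_Theory"
begin

definition regular_mod :: "int \<Rightarrow> nat \<Rightarrow> bool" where
  "regular_mod a n \<longleftrightarrow> (\<exists>x::int. [a^2 * x = a] (mod int n))"

definition V :: "nat \<Rightarrow> nat" where
  "V n = card {a::int. 1 \<le> a \<and> a \<le> int n \<and> regular_mod a n}"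

end

theory Submission
  imports Defs "HOL-Computational_Algebra.Squarefree"
begin

lemma sqf_regular:
  fixes a n :: int
  assumes sq: "squarefree n" and nz: "n \<noteq> 0"
  shows "\<exists>x. [a^2 * x = a] (mod n)"
proof -
  define g where "g = gcd a n"
  have gpos: "g \<noteq> 0" using nz by (simp add: g_def)
  obtain m where nm: "n = g * m" unfolding g_def by (meson gcd_dvd2 dvdE)
  obtain b where ab: "a = g * b" unfolding g_def by (meson gcd_dvd1 dvdE)
  have cgm: "coprime g m"
  proof (rule coprimeI)
    fix d assume "d dvd g" "d dvd m"
    hence "d^2 dvd g * m" by (simp add: power2_eq_square mult_dvd_mono)
    thus "is_unit d" using squarefreeD[OF sq] nm by simp
  qed
  have "coprime (a div g) (n div g)" unfolding g_def using gpos g_def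
    by (simp add: div_gcd_coprime)
  hence cbm: "coprime b m" using ab nm gpos by simp
  have "coprime a m" using ab cgm cbm by simp
  then obtain x where x: "[a * x = 1] (mod m)" using cong_solve_coprime_int by blast
  hence "m dvd a * x - 1" by (metis cong_iff_dvd_diff)
  hence "g * m dvd g * (b * (a * x - 1))" by (simp add: mult_dvd_mono)
  hence "n dvd a^2 * x - a" using nm ab by (simp add: power2_eq_square algebra_simps)
  hence "[a^2 * x = a] (mod n)" by (metis cong_iff_dvd_diff)
  thus ?thesis by blast
qed

lemma V_le: "V n \<le> n"
proof -
  have "V n \<le> card {1..int n}" unfolding V_def by (rule card_mono) auto
  thus ?thesis by simp
qed

lemma V_sqf: assumes "squarefree (int n)" "n > 0" shows "V n = n"
proof -
  have "{a::int. 1 \<le> a \<and> a \<le> int n \<and> regular_mod a n} = {1..int n}"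
    using sqf_regular[OF assms(1)] assms(2) by (auto simp: regular_mod_def)
  thus ?thesis unfolding V_def by simp
qed

lemma V_4: assumes "4 dvd N" "N \<ge> 8" shows "V N + 2 \<le> N"
proof -
  have nr: "\<not> regular_mod a N" if "a mod 4 = 2" for a :: int
  proof
    assume "regular_mod a N"
    then obtain x where "[a^2 * x = a] (mod int N)" unfolding regular_mod_def by blast
    moreover have "4 dvd int N" using assms(1) by presburger
    ultimately have "[a^2 * x = a] (mod 4)" using cong_dvd_modulus by blast
    hence "(a^2 * x) mod 4 = a mod 4" by (simp add: cong_def)
    moreover have "(a^2 * x) mod 4 = 0"
    proof -
      define k where "k = a div 4"
      have "a = 4*k+2" using that unfolding k_def by presburger
      hence "a^2 * x = 4 * ((4*k*k+4*k+1)*x)" by (simp add: power2_eq_square algebra_simps)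
      thus ?thesis by (metis dvd_triv_left dvd_imp_mod_0)
    qed
    ultimately show False using that by simp
  qed
  have "{a::int. 1 \<le> a \<and> a \<le> int N \<and> regular_mod a N} \<subseteq> {1..int N} - {2,6}"
    using nr by force
  hence "V N \<le> card ({1..int N} - {2,6})" unfolding V_def by (intro card_mono) auto
  also have "\<dots> = N - 2" using assms by (simp add: card_Diff_subset)
  finally show ?thesis using assms by simp
qed

theorem proposition1:
  shows "infinite {n::nat. 0 < n \<and> V (n + 1) > V n} \<and> infinite {n::nat. 0 < n \<and> V (n + 1) < V n}"
proof
  show "infinite {n::nat. 0 < n \<and> V (n + 1) > V n}"
    unfolding infinite_nat_iff_unbounded
  proof
    fix M :: nat
    obtain p where p: "prime p" "p > M + 2" using bigger_prime by blast
    have "squarefree (int p)" using p by (simp add: squarefree_prime)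
    hence "V p = p" using p by (intro V_sqf) (auto simp: prime_gt_0_nat)
    moreover have "V (p - 1) \<le> p - 1" by (rule V_le)
    ultimately have "V (p - 1 + 1) > V (p - 1)" using p by simp
    thus "\<exists>n>M. n \<in> {n. 0 < n \<and> V n < V (n + 1)}" using p by (intro exI[of _ "p - 1"]) auto
  qed
next
  show "infinite {n::nat. 0 < n \<and> V (n + 1) < V n}"
    unfolding infinite_nat_iff_unbounded
  proof
    fix M :: nat
    obtain p where p: "prime p" "p > M + 8" using bigger_prime by blast
    have odd: "odd p" using p by (intro prime_odd_nat) auto
    have sp: "squarefree (int p)" using p by (simp add: squarefree_prime)
    show "\<exists>n>M. n \<in> {n. 0 < n \<and> V (n + 1) < V n}"
    proof (cases "p mod 4 = 3")
      case True
      have "V p = p" using sp p by (intro V_sqf) (auto simp: prime_gt_0_nat)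
      moreover have "V (p+1) + 2 \<le> p + 1" using True p by (intro V_4) presburger+
      ultimately show ?thesis using p by (intro exI[of _ p]) auto
    next
      case False
      hence m1: "p mod 4 = 1" using odd by presburger
      have "coprime (3::int) (int p)"
      proof -
        have "p \<noteq> 3" using p by simp
        hence "coprime 3 p" using p by (intro primes_coprime) auto
        thus ?thesis by (metis coprime_int_iff of_nat_numeral)
      qed
      hence "squarefree (3 * int p)" using sp by (intro squarefree_mult_coprime) (auto intro: squarefree_prime)
      hence "squarefree (int (3 * p))" by simp
      hence "V (3*p) = 3*p" using p by (intro V_sqf) (auto simp: prime_gt_0_nat)
      moreover have "V (3*p+1) + 2 \<le> 3*p + 1" using m1 p by (intro V_4) presburger+
      ultimately show ?thesis using p by (intro exI[of _ "3*p"]) auto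
    qed
  qed
qed

end
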